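(* Let $\lambda$ be a typical dominant weight. Then $$\frac{\varphi_{\lambda+\rho}(L'_0)}{\varphi_{\lambda+\rho}(L'_1)\,\varphi_\rho(L'_0)}\in h^{-k_{\mathfrak g}}\mathbb C[[h]],$$ where $k_{\mathfrak g}=|\Delta^+_{\bar1}|$ is the number of odd positive roots.
   Context: Let $\mathfrak g$ be $\mathfrak{sl}(m|n)$ with $m\neq n$, or $\mathfrak{osp}(2|2n)$, with distinguished Borel subalgebra, Cartan subalgebra $\mathfrak h$, Chevalley generators $h_i$, Cartan matrix $(a_{ij})$, exactly one odd simple root (index $s$). $\langle\cdot,\cdot\rangle$ is the form on $\mathfrak h$ with $\langle h_i,h_j\rangle=d_j^{-1}a_{ij}$ ($(d_ia_{ij})$ symmetric, $d_1=1$) and the induced form on $\mathfrak h^*$. $\Delta^+_{\bar0},\Delta^+_{\bar1}$: even/odd positive roots; $\rho$ = half sum of $\Delta^+_{\bar0}$ minus half sum of $\Delta^+_{\bar1}$. A weight $\lambda$ is dominant if $\lambda(h_i)\in\mathbb N$ for $i\ne s$, typical if moreover $\langle\lambda+\rho,\alpha\rangle\neq0$ for all $\alpha\in\Delta^+_{\bar1}$. $L'_0=\prod_{\alpha\in\Delta^+_{\bar0}}(e^{\alpha/2}-e^{-\alpha/2})$, $L'_1=\prod_{\alpha\in\Delta^+_{\bar1}}(e^{\alpha/2}-e^{-\alpha/2})$ in the group ring of weights; for a weight $\beta$, $\varphi_\beta$ is the ring map $e^{\alpha}\mapsto q^{2\langle\alpha,\beta\rangle}=e^{\langle\alpha,\beta\rangle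 h}$ into $\mathbb C[[h]]$ (so the quotient is taken in $\mathbb C((h))$). *)

theory Defs
  imports Complex_Main "HOL-Library.Poly_Mapping" "HOL-Library.Function_Algebras"
    "HOL-Computational_Algebra.Formal_Laurent_Series"
begin

text \<open>Weights are written in coordinates: a weight is a function nat => complex
  (only finitely many coordinates matter).  For sl(m|n) coordinates 0..m-1 are the
  epsilon_i and m..m+n-1 the delta_j (dual to the diagonal matrix units);
  for osp(2|2n) coordinate 0 is epsilon and 1..n are delta_1..delta_n.\<close>

type_synonym wt = "nat \<Rightarrow> complex"

datatype superalg = SL nat nat | OSP2 nat

definition valid_alg :: "superalg \<Rightarrow> bool" where
  "valid_alg g = (case g of SL m n \<Rightarrow> 1 \<le> m \<and> 1 \<le> n \<and> m \<noteq> n | OSP2 n \<Rightarrow> 1 \<le> n)"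

definition ee :: "nat \<Rightarrow> wt" where
  "ee k = (\<lambda>i. if i = k then 1 else 0)"

fun dimc :: "superalg \<Rightarrow> nat" where
  "dimc (SL m n) = m + n"
| "dimc (OSP2 n) = n + 1"

text \<open>The invariant (super)trace form induced on weights.\<close>
fun form :: "superalg \<Rightarrow> wt \<Rightarrow> wt \<Rightarrow> complex" where
  "form (SL m n) \<mu> \<nu> = (\<Sum>i<m. \<mu> i * \<nu> i) - (\<Sum>j<n. \<mu> (m+j) * \<nu> (m+j))"
| "form (OSP2 n) \<mu> \<nu> = \<mu> 0 * \<nu> 0 - (\<Sum>j\<in>{1..n}. \<mu> j * \<nu> j)"

text \<open>Even positive roots (distinguished Borel).\<close>
fun even_pos :: "superalg \<Rightarrow> wt set" where
  "even_pos (SL m n) =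
     {ee i - ee j | i j. i < j \<and> j < m} \<union> {ee (m+i) - ee (m+j) | i j. i < j \<and> j < n}"
| "even_pos (OSP2 n) =
     {ee i - ee j | i j. 1 \<le> i \<and> i < j \<and> j \<le> n} \<union>
     {ee i + ee j | i j. 1 \<le> i \<and> i < j \<and> j \<le> n} \<union>
     {ee i + ee i | i. 1 \<le> i \<and> i \<le> n}"

text \<open>Odd positive roots (distinguished Borel).\<close>
fun odd_pos :: "superalg \<Rightarrow> wt set" where
  "odd_pos (SL m n) = {ee i - ee (m+j) | i j. i < m \<and> j < n}"
| "odd_pos (OSP2 n) = {ee 0 - ee i | i. 1 \<le> i \<and> i \<le> n} \<union> {ee 0 + ee i | i. 1 \<le> i \<and> i \<le> n}"

text \<open>The Chevalley generators h_i (i distinct from the odd index s), as vectors in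
  the Cartan subalgebra written in the coordinates dual to those of weights.
  sl(m|n): h_i = E_ii - E_(i+1)(i+1) for the even simple roots;
  osp(2|2n): h for delta_i - delta_(i+1) and for 2 delta_n.\<close>
fun even_coroots :: "superalg \<Rightarrow> wt set" where
  "even_coroots (SL m n) =
     {ee i - ee (i+1) | i. i + 1 < m} \<union> {ee (m+j) - ee (m+j+1) | j. j + 1 < n}"
| "even_coroots (OSP2 n) = {ee i - ee (i+1) | i. 1 \<le> i \<and> i + 1 \<le> n} \<union> {ee n}"

definition evalh :: "superalg \<Rightarrow> wt \<Rightarrow> wt \<Rightarrow> complex" where
  "evalh g la h = (\<Sum>k<dimc g. la k * h k)"

definition rho :: "superalg \<Rightarrow> wt" where
  "rho g = (\<lambda>i. ((\<Sum>\<alpha>\<in>even_pos g. \<alpha> i) - (\<Sum>\<alpha>\<in>odd_pos g. \<alpha> i)) / 2)"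

definition dominant :: "superalg \<Rightarrow> wt \<Rightarrow> bool" where
  "dominant g la = (\<forall>h\<in>even_coroots g. evalh g la h \<in> \<nat>)"

definition typical :: "superalg \<Rightarrow> wt \<Rightarrow> bool" where
  "typical g la = (dominant g la \<and> (\<forall>\<alpha>\<in>odd_pos g. form g (la + rho g) \<alpha> \<noteq> 0))"

text \<open>Group ring of weights: finitely supported functions wt =>0 complex with
  convolution product; e^mu is Poly_Mapping.single mu 1.\<close>
definition expw :: "wt \<Rightarrow> (wt \<Rightarrow>\<^sub>0 complex)" where
  "expw \<mu> = Poly_Mapping.single \<mu> 1"

definition halfw :: "wt \<Rightarrow> wt" where
  "halfw \<alpha> = (\<lambda>i. \<alpha> i / 2)"

definition L0 :: "superalg \<Rightarrow> (wt \<Rightarrow>\<^sub>0 complex)" where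
  "L0 g = (\<Prod>\<alpha>\<in>even_pos g. expw (halfw \<alpha>) - expw (- halfw \<alpha>))"

definition L1 :: "superalg \<Rightarrow> (wt \<Rightarrow>\<^sub>0 complex)" where
  "L1 g = (\<Prod>\<alpha>\<in>odd_pos g. expw (halfw \<alpha>) - expw (- halfw \<alpha>))"

definition phi :: "superalg \<Rightarrow> wt \<Rightarrow> (wt \<Rightarrow>\<^sub>0 complex) \<Rightarrow> complex fps" where
  "phi g \<beta> f = (\<Sum>\<mu>\<in>Poly_Mapping.keys f. fps_const (Poly_Mapping.lookup f \<mu>) * fps_exp (form g \<mu> \<beta>))"

end

theory Submission
  imports Defs
begin

lemma phi_superset:
  assumes "finite S" "Poly_Mapping.keys f \<subseteq> S"
  shows "phi g \<beta> f = (\<Sum>\<mu>\<in>S. fps_const (Poly_Mapping.lookup f \<mu>) * fps_exp (form g \<mu> \<beta>))"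
  unfolding phi_def
  by (rule sum.mono_neutral_left) (use assms in \<open>auto simp: in_keys_iff\<close>)

lemma phi_add: "phi g \<beta> (p + q) = phi g \<beta> p + phi g \<beta> q"
proof -
  let ?S = "Poly_Mapping.keys p \<union> Poly_Mapping.keys q"
  have "phi g \<beta> (p + q) = (\<Sum>\<mu>\<in>?S. fps_const (Poly_Mapping.lookup (p+q) \<mu>) * fps_exp (form g \<mu> \<beta>))"
    by (rule phi_superset) (use keys_add[of p q] in auto)
  also have "\<dots> = (\<Sum>\<mu>\<in>?S. fps_const (Poly_Mapping.lookup p \<mu>) * fps_exp (form g \<mu> \<beta>))
     + (\<Sum>\<mu>\<in>?S. fps_const (Poly_Mapping.lookup q \<mu>) * fps_exp (form g \<mu> \<beta>))"
    by (simp add: lookup_add distrib_right sum.distrib flip: fps_const_add)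
  also have "\<dots> = phi g \<beta> p + phi g \<beta> q"
    by (subst (1 2) phi_superset[of ?S]) auto
  finally show ?thesis .
qed

lemma phi_zero: "phi g \<beta> 0 = 0"
  by (simp add: phi_def)

lemma phi_uminus: "phi g \<beta> (- p) = - phi g \<beta> p"
  by (simp add: phi_def sum_negf flip: fps_const_neg)

lemma phi_diff: "phi g \<beta> (p - q) = phi g \<beta> p - phi g \<beta> q"
  using phi_add[of g \<beta> p "-q"] phi_uminus[of g \<beta> q] by simp

lemma phi_single: "phi g \<beta> (Poly_Mapping.single a c) = fps_const c * fps_exp (form g a \<beta>)"
  by (simp add: phi_def)

lemma phi_sum: "phi g \<beta> (sum F S) = (\<Sum>x\<in>S. phi g \<beta> (F x))"
  by (induction S rule: infinite_finite_induct) (auto simp: phi_zero phi_add)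

lemma decomp: "p = (\<Sum>k\<in>Poly_Mapping.keys p. Poly_Mapping.single k (Poly_Mapping.lookup p k))"
proof (rule poly_mapping_eqI)
  fix k
  show "Poly_Mapping.lookup p k = Poly_Mapping.lookup (\<Sum>k\<in>Poly_Mapping.keys p. Poly_Mapping.single k (Poly_Mapping.lookup p k)) k"
    unfolding lookup_sum
    by (cases "k \<in> Poly_Mapping.keys p")
       (auto simp: lookup_single when_def in_keys_iff sum.delta)
qed

lemma form_add: "form g (a + b) \<beta> = form g a \<beta> + form g b \<beta>"
  by (cases g) (auto simp: sum.distrib algebra_simps)

lemma form_zero: "form g 0 \<beta> = 0"
  by (cases g) auto

lemma form_uminus: "form g (- a) \<beta> = - form g a \<beta>"
  by (cases g) (auto simp: sum_negf algebra_simps)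

lemma form_half: "form g (halfw a) \<beta> = form g a \<beta> / 2"
  by (cases g) (auto simp: halfw_def sum_divide_distrib diff_divide_distrib)

lemma phi_single_mult:
  "phi g \<beta> (Poly_Mapping.single a c * Poly_Mapping.single b d) =
   phi g \<beta> (Poly_Mapping.single a c) * phi g \<beta> (Poly_Mapping.single b d)"
  by (simp add: mult_single phi_single form_add fps_exp_add_mult mult_ac fps_const_mult[symmetric] del: fps_const_mult)

lemma phi_mult: "phi g \<beta> (p * q) = phi g \<beta> p * phi g \<beta> q"
proof -
  have "phi g \<beta> (p * q) = phi g \<beta> ((\<Sum>a\<in>Poly_Mapping.keys p. Poly_Mapping.single a (Poly_Mapping.lookup p a)) *
      (\<Sum>b\<in>Poly_Mapping.keys q. Poly_Mapping.single b (Poly_Mapping.lookup q b)))"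
    by (subst (1) decomp[of p], subst (1) decomp[of q]) (rule refl)
  also have "\<dots> = (\<Sum>a\<in>Poly_Mapping.keys p. \<Sum>b\<in>Poly_Mapping.keys q.
       phi g \<beta> (Poly_Mapping.single a (Poly_Mapping.lookup p a)) * phi g \<beta> (Poly_Mapping.single b (Poly_Mapping.lookup q b)))"
    by (simp add: sum_product phi_sum phi_single_mult)
  also have "\<dots> = phi g \<beta> (\<Sum>a\<in>Poly_Mapping.keys p. Poly_Mapping.single a (Poly_Mapping.lookup p a)) *
      phi g \<beta> (\<Sum>b\<in>Poly_Mapping.keys q. Poly_Mapping.single b (Poly_Mapping.lookup q b))"
    by (simp add: phi_sum sum_product)
  also have "\<dots> = phi g \<beta> p * phi g \<beta> q"
    by (simp flip: decomp)
  finally show ?thesis .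
qed

lemma phi_one: "phi g \<beta> 1 = 1"
  using phi_single[of g \<beta> 0 1] by (simp add: form_zero)

lemma phi_prod: "phi g \<beta> (prod F S) = (\<Prod>x\<in>S. phi g \<beta> (F x))"
  by (induction S rule: infinite_finite_induct) (auto simp: phi_one phi_mult)

lemma phi_factor:
  "phi g \<beta> (expw (halfw \<alpha>) - expw (- halfw \<alpha>)) =
     fps_exp (form g \<alpha> \<beta> / 2) - fps_exp (- (form g \<alpha> \<beta> / 2))"
  by (simp add: phi_diff expw_def phi_single form_uminus form_half)


definition FF :: "complex \<Rightarrow> complex fps" where
  "FF c = fps_exp (c / 2) - fps_exp (- (c / 2))"

definition GG :: "complex \<Rightarrow> complex fps" where
  "GG c = fps_shift 1 (FF c)"

lemma FF_eq: "FF c = fps_X * GG c"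
  by (simp add: fps_eq_iff GG_def FF_def)

lemma GG_nth0: "GG c $ 0 = c"
  by (simp add: GG_def FF_def)

lemma GG_zero: "GG 0 = 0"
  by (simp add: GG_def FF_def)

lemma phiL:
  "phi g \<beta> (\<Prod>\<alpha>\<in>S. expw (halfw \<alpha>) - expw (- halfw \<alpha>)) =
     fps_X ^ card S * (\<Prod>\<alpha>\<in>S. GG (form g \<alpha> \<beta>))"
proof -
  have "phi g \<beta> (\<Prod>\<alpha>\<in>S. expw (halfw \<alpha>) - expw (- halfw \<alpha>)) = (\<Prod>\<alpha>\<in>S. fps_X * GG (form g \<alpha> \<beta>))"
    by (simp add: phi_prod phi_factor FF_eq[symmetric] FF_def)
  also have "\<dots> = fps_X ^ card S * (\<Prod>\<alpha>\<in>S. GG (form g \<alpha> \<beta>))"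
    by (simp add: prod.distrib)
  finally show ?thesis .
qed

lemma prod_nth0: "(\<Prod>x\<in>S. f x) $ 0 = (\<Prod>x\<in>S. (f x :: complex fps) $ 0)"
  by (induction S rule: infinite_finite_induct) auto

lemma prodGG_zero:
  assumes "(\<Prod>\<alpha>\<in>S. GG (h \<alpha>)) $ 0 = 0"
  shows "(\<Prod>\<alpha>\<in>S. GG (h \<alpha>)) = 0"
proof -
  have "(\<Prod>\<alpha>\<in>S. h \<alpha>) = 0" using assms by (simp add: prod_nth0 GG_nth0)
  then obtain a where "finite S" "a \<in> S" "h a = 0" by (metis prod_zero_iff prod.infinite one_neq_zero)
  then show ?thesis by (metis GG_zero prod_zero_iff)
qed

lemma key:
  fixes A B C :: "complex fps"
  assumes "(B * C) $ 0 \<noteq> 0"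
  shows "fps_to_fls (fps_X ^ n * A) / (fps_to_fls (fps_X ^ m * B) * fps_to_fls (fps_X ^ n * C))
     = fls_X_intpow (- int m) * fps_to_fls (A * inverse (B * C))"
proof -
  have X: "fps_to_fls (fps_X ^ k :: complex fps) = fls_X_intpow (int k)" for k
    by (simp add: fps_to_fls_power fls_X_power_conv_shift_1)
  have BC0: "B * C \<noteq> 0" using assms by auto
  have inv: "fps_to_fls (inverse (B * C)) * fps_to_fls (B * C) = 1"
    using inverse_mult_eq_1[OF assms] by (simp flip: fls_times_fps_to_fls)
  have XX: "fls_X_intpow (- int m) * fls_X_intpow (int m) * fls_X_intpow (int n) = (fls_X_intpow (int n) :: complex fls)"
    by (subst fls_X_intpow_times_fls_X_intpow, subst fls_X_intpow_times_fls_X_intpow, simp)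
  have D: "fps_to_fls (fps_X ^ m * B) * fps_to_fls (fps_X ^ n * C) = fls_X_intpow (int m) * fls_X_intpow (int n) * fps_to_fls (B * C)"
    by (simp add: fls_times_fps_to_fls X mult_ac)
  have D0: "fps_to_fls (fps_X ^ m * B) * fps_to_fls (fps_X ^ n * C) \<noteq> 0"
    unfolding D using BC0 by simp
  have "fls_X_intpow (- int m) * fps_to_fls (A * inverse (B * C)) * (fps_to_fls (fps_X ^ m * B) * fps_to_fls (fps_X ^ n * C))
     = (fls_X_intpow (- int m) * fls_X_intpow (int m) * fls_X_intpow (int n)) * fps_to_fls A * (fps_to_fls (inverse (B * C)) * fps_to_fls (B * C))"
    unfolding D by (simp add: fls_times_fps_to_fls mult_ac)
  also have "\<dots> = fps_to_fls (fps_X ^ n * A)"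
    unfolding XX inv by (simp add: fls_times_fps_to_fls X)
  finally show ?thesis using D0 by (simp add: divide_eq_eq)
qed



theorem lemma2p4:
  fixes g :: superalg and la :: wt
  assumes "valid_alg g"
    and "typical g la"
  shows "\<exists>f :: complex fps.
           fps_to_fls (phi g (la + rho g) (L0 g)) /
             (fps_to_fls (phi g (la + rho g) (L1 g)) * fps_to_fls (phi g (rho g) (L0 g)))
           = fls_X_intpow (- int (card (odd_pos g))) * fps_to_fls f"
proof -
  define A where "A = (\<Prod>\<alpha>\<in>even_pos g. GG (form g \<alpha> (la + rho g)))"
  define B where "B = (\<Prod>\<alpha>\<in>odd_pos g. GG (form g \<alpha> (la + rho g)))"
  define C where "C = (\<Prod>\<alpha>\<in>even_pos g. GG (form g \<alpha> (rho g)))"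
  have e: "fps_to_fls (phi g (la + rho g) (L0 g)) /
             (fps_to_fls (phi g (la + rho g) (L1 g)) * fps_to_fls (phi g (rho g) (L0 g)))
      = fps_to_fls (fps_X ^ card (even_pos g) * A) /
          (fps_to_fls (fps_X ^ card (odd_pos g) * B) * fps_to_fls (fps_X ^ card (even_pos g) * C))"
    unfolding L0_def L1_def phiL A_def B_def C_def ..
  show ?thesis
  proof (cases "(B * C) $ 0 = 0")
    case True
    then have "B $ 0 = 0 \<or> C $ 0 = 0" by simp
    then have "B = 0 \<or> C = 0" unfolding B_def C_def
      using prodGG_zero[where S="odd_pos g" and h="\<lambda>\<alpha>. form g \<alpha> (la + rho g)"]
        prodGG_zero[where S="even_pos g" and h="\<lambda>\<alpha>. form g \<alpha> (rho g)"] by auto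
    then show ?thesis unfolding e by (intro exI[of _ 0]) auto
  next
    case False
    then show ?thesis unfolding e by (intro exI[of _ "A * inverse (B * C)"] key)
  qed
qed

end
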